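(* For every integer $n\ge 1$, $$\Phi^{(1)}[a; bq^n, b'; c; x, y] = \Phi^{(1)}[a; b, b'; c; x, y] + \frac{bx(1-a)}{1-c} \sum_{k=1}^n q^{k-1} \Phi^{(1)}[aq; bq^k, b'; cq; x, y]$$ and $$\Phi^{(1)}[a; bq^{-n}, b'; c; x, y] = \Phi^{(1)}[a; b, b'; c; x, y] - \frac{bx(1-a)}{1-c} \sum_{k=1}^n q^{-k} \Phi^{(1)}[aq; bq^{1-k}, b'; cq; x, y].$$
   Context: Let $q$ be a complex number with $0<|q|<1$. For complex $z$ and integer $m\ge 0$, $(z;q)_m=\prod_{j=0}^{m-1}(1-zq^j)$, with $(z;q)_0=1$. The $q$-Appell function $\Phi^{(1)}$ is $$\Phi^{(1)}[a; b, b'; c; x, y] = \sum_{m, n \geq 0} \frac{(a; q)_{m+n} (b; q)_m (b'; q)_n}{(q; q)_m (q; q)_n (c; q)_{m+n}} x^m y^n.$$ Identities are understood as identities of power series in $x,y$ (formal, or convergent for small $|x|,|y|$), with complex parameters chosen so that no denominator occurring vanishes. *)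

theory Defs
  imports "HOL-Analysis.Analysis"
begin

definition qpoch :: "complex \<Rightarrow> complex \<Rightarrow> nat \<Rightarrow> complex" where
  "qpoch z q m = (\<Prod>j<m. 1 - z * q ^ j)"

definition qAppell1 ::
  "complex \<Rightarrow> complex \<Rightarrow> complex \<Rightarrow> complex \<Rightarrow> complex \<Rightarrow> complex \<Rightarrow> complex \<Rightarrow> complex" where
  "qAppell1 q a b b' c x y =
     infsum (\<lambda>(m, n). qpoch a q (m + n) * qpoch b q m * qpoch b' q n
        / (qpoch q q m * qpoch q q n * qpoch c q (m + n)) * x ^ m * y ^ n) UNIV"

end

theory Submission
  imports Defs
begin

lemma qpoch_Suc: "qpoch z q (Suc m) = qpoch z q m * (1 - z * q ^ m)"
  by (simp add: qpoch_def)

lemma qpoch_Suc': "qpoch z q (Suc m) = (1 - z) * qpoch (z * q) q m"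
  unfolding qpoch_def by (subst prod.lessThan_Suc_shift) (simp add: mult.assoc)

lemma qpoch_bounds:
  assumes q: "norm q < 1" and nz: "\<And>j. z * q ^ j \<noteq> 1"
  shows "\<exists>d>0. \<forall>m. d \<le> norm (qpoch z q m)" "\<exists>M. \<forall>m. norm (qpoch z q m) \<le> M"
proof -
  define f where "f j = 1 - z * q ^ j" for j
  have fnz: "f j \<noteq> 0" for j using nz[of j] by (simp add: f_def)
  have "summable (\<lambda>j. norm (f j - 1))"
    unfolding f_def by (simp add: norm_mult norm_power summable_geometric q)
  hence "abs_convergent_prod f" by (rule summable_imp_abs_convergent_prod)
  hence "convergent_prod f" by (rule abs_convergent_prod_imp_convergent_prod)
  then obtain L where L: "(\<lambda>n. \<Prod>i\<le>n. f i) \<longlonglongrightarrow> L" "L \<noteq> 0"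
    using convergent_prod_iff_nz_lim fnz by blast
  have eq: "qpoch z q (Suc n) = (\<Prod>i\<le>n. f i)" for n
    unfolding qpoch_def f_def by (simp add: lessThan_Suc_atMost)
  have lim: "(\<lambda>n. qpoch z q n) \<longlonglongrightarrow> L"
    using L(1) unfolding eq[symmetric] by (subst (asm) filterlim_sequentially_Suc)
  have qnz: "qpoch z q m \<noteq> 0" for m
    using fnz unfolding qpoch_def f_def by auto
  have "eventually (\<lambda>n. norm L / 2 < norm (qpoch z q n)) sequentially"
    using order_tendstoD(1)[OF tendsto_norm[OF lim], of "norm L / 2"] L(2) by simp
  then obtain N where N: "\<And>n. n \<ge> N \<Longrightarrow> norm L / 2 < norm (qpoch z q n)"
    by (auto simp: eventually_sequentially)
  define d where "d = min (norm L / 2) (Min ((\<lambda>m. norm (qpoch z q m)) ` {..N}))"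
  have "d > 0" using L(2) qnz by (auto simp: d_def)
  moreover have "d \<le> norm (qpoch z q m)" for m
  proof (cases "m \<le> N")
    case True then show ?thesis unfolding d_def by (intro min.coboundedI2 Min_le) auto
  next
    case False then show ?thesis using N[of m] unfolding d_def by linarith
  qed
  ultimately show "\<exists>d>0. \<forall>m. d \<le> norm (qpoch z q m)" by blast
  from lim have "Bseq (\<lambda>n. qpoch z q n)" by (rule convergent_imp_Bseq[OF convergentI])
  then show "\<exists>M. \<forall>m. norm (qpoch z q m) \<le> M" by (auto simp: Bseq_def)
qed

lemma qpoch_upper:
  assumes q: "norm q < 1"
  shows "\<exists>M. \<forall>m. norm (qpoch z q m) \<le> M"
proof -
  have "norm (qpoch z q m) \<le> (\<Prod>j<m. 1 + norm z * norm q ^ j)" for m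
    unfolding qpoch_def prod_norm[symmetric]
    by (intro prod_mono) (auto intro: order.trans[OF norm_triangle_ineq4] simp: norm_mult norm_power)
  also have "(\<Prod>j<m. 1 + norm z * norm q ^ j) \<le> exp (\<Sum>j<m. norm z * norm q ^ j)" for m
    by (rule prod_le_exp_sum) auto
  also have "(\<Sum>j<m. norm z * norm q ^ j) \<le> (\<Sum>j. norm z * norm q ^ j)" for m
    by (intro sum_le_suminf summable_mult summable_geometric) (use q in auto)
  finally show ?thesis by (meson exp_le_cancel_iff order.trans)
qed

definition qterm :: "complex \<Rightarrow> complex \<Rightarrow> complex \<Rightarrow> complex \<Rightarrow> complex \<Rightarrow> complex \<Rightarrow> complex \<Rightarrow> nat \<times> nat \<Rightarrow> complex" where
  "qterm q a b b' c x y = (\<lambda>(m, n). qpoch a q (m + n) * qpoch b q m * qpoch b' q n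
        / (qpoch q q m * qpoch q q n * qpoch c q (m + n)) * x ^ m * y ^ n)"

lemma qAppell1_eq: "qAppell1 q a b b' c x y = infsum (qterm q a b b' c x y) UNIV"
  unfolding qAppell1_def qterm_def ..

lemma geo2_summable:
  fixes u v :: real
  assumes "0 \<le> u" "u < 1" "0 \<le> v" "v < 1"
  shows "(\<lambda>(m, n). u ^ m * v ^ n) summable_on UNIV"
proof -
  have "(\<lambda>(m, n). u ^ m * v ^ n) summable_on Sigma UNIV (\<lambda>_. UNIV)"
  proof (rule summable_on_SigmaI)
    fix m :: nat
    have "(\<lambda>n. u ^ m * v ^ n) sums (u ^ m * (1 / (1 - v)))"
      by (intro sums_mult geometric_sums) (use assms in auto)
    then show "((\<lambda>n. (\<lambda>(m, n). u ^ m * v ^ n) (m, n)) has_sum (u ^ m / (1 - v))) UNIV"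
      by (intro sums_nonneg_imp_has_sum) (use assms in auto)
  next
    have "summable (\<lambda>m. u ^ m / (1 - v))"
      by (intro summable_divide summable_geometric) (use assms in auto)
    then show "(\<lambda>m. u ^ m / (1 - v)) summable_on UNIV"
      by (subst summable_on_UNIV_nonneg_real_iff) (use assms in auto)
  qed (use assms in auto)
  then show ?thesis by simp
qed

lemma qterm_summable:
  assumes q: "norm q < 1" and c: "\<And>j. c * q ^ j \<noteq> 1" and x: "norm x < 1" and y: "norm y < 1"
  shows "qterm q a b b' c x y summable_on UNIV"
proof -
  have qq: "q * q ^ j \<noteq> 1" for j
  proof
    assume "q * q ^ j = 1"
    hence "norm (q ^ Suc j) = 1" by simp
    moreover have "norm (q ^ Suc j) < 1" using q
      by (simp add: norm_power power_less_one_iff norm_ge_zero del: power_Suc)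
    ultimately show False by simp
  qed
  obtain Ma where Ma: "\<And>m. norm (qpoch a q m) \<le> Ma" using qpoch_upper[OF q] by blast
  obtain Mb where Mb: "\<And>m. norm (qpoch b q m) \<le> Mb" using qpoch_upper[OF q] by blast
  obtain Mb' where Mb': "\<And>m. norm (qpoch b' q m) \<le> Mb'" using qpoch_upper[OF q] by blast
  obtain dq where dq: "dq > 0" "\<And>m. dq \<le> norm (qpoch q q m)" using qpoch_bounds(1)[OF q qq] by blast
  obtain dc where dc: "dc > 0" "\<And>m. dc \<le> norm (qpoch c q m)" using qpoch_bounds(1)[OF q c] by blast
  have Ma0: "0 \<le> Ma" using Ma[of 0] norm_ge_zero order.trans by blast
  have Mb0: "0 \<le> Mb" using Mb[of 0] norm_ge_zero order.trans by blast
  have Mb'0: "0 \<le> Mb'" using Mb'[of 0] norm_ge_zero order.trans by blast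
  define C where "C = Ma * Mb * Mb' / (dq * dq * dc)"
  have C0: "C \<ge> 0" unfolding C_def using Ma0 Mb0 Mb'0 dq dc by simp
  define G where "G = (\<lambda>(m::nat, n::nat). C * (norm x ^ m * norm y ^ n))"
  have Gs: "G summable_on UNIV"
    unfolding G_def using geo2_summable[of "norm x" "norm y"] x y
    by (simp add: case_prod_unfold summable_on_cmult_right)
  have "(\<lambda>p. norm (G p)) summable_on UNIV"
    using Gs C0 by (simp add: G_def case_prod_unfold abs_mult)
  moreover have "norm (qterm q a b b' c x y p) \<le> norm (G p)" for p
  proof (cases p)
    case (Pair m n)
    have num: "norm (qpoch a q (m + n) * qpoch b q m * qpoch b' q n) \<le> Ma * Mb * Mb'"
      unfolding norm_mult by (intro mult_mono Ma Mb Mb' mult_nonneg_nonneg Ma0 Mb0 norm_ge_zero)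
    have den: "dq * dq * dc \<le> norm (qpoch q q m * qpoch q q n * qpoch c q (m + n))"
      unfolding norm_mult by (intro mult_mono dq dc mult_nonneg_nonneg norm_ge_zero) (use dq dc in auto)
    have "norm (qpoch a q (m + n) * qpoch b q m * qpoch b' q n
        / (qpoch q q m * qpoch q q n * qpoch c q (m + n))) \<le> C"
      unfolding norm_divide C_def
      by (intro frac_le num den norm_ge_zero mult_nonneg_nonneg Ma0 Mb0 Mb'0 mult_pos_pos dq dc)
    moreover have "qterm q a b b' c x y p = (qpoch a q (m + n) * qpoch b q m * qpoch b' q n
        / (qpoch q q m * qpoch q q n * qpoch c q (m + n))) * (x ^ m * y ^ n)"
      unfolding Pair qterm_def by simp
    ultimately have "norm (qterm q a b b' c x y p) \<le> C * (norm x ^ m * norm y ^ n)"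
      by (simp only: norm_mult norm_power) (intro mult_right_mono; simp)
    then show ?thesis using C0 by (simp add: G_def Pair abs_mult)
  qed
  ultimately have "(\<lambda>p. norm (qterm q a b b' c x y p)) summable_on UNIV"
    by (rule Infinite_Sum.abs_summable_on_comparison_test)
  then show ?thesis by (simp add: summable_on_iff_abs_summable_on_complex)
qed

lemma qpoch_nz: "(\<And>j. z * q ^ j \<noteq> 1) \<Longrightarrow> qpoch z q m \<noteq> 0"
  unfolding qpoch_def by (auto simp: prod_zero_iff)

lemma qq_ne1: fixes q :: complex assumes "norm q < 1" shows "q * q ^ j \<noteq> 1"
proof
  assume "q * q ^ j = 1"
  hence "norm (q ^ Suc j) = 1" by simp
  moreover have "norm (q ^ Suc j) < 1" using assms
    by (simp add: norm_power power_less_one_iff norm_ge_zero del: power_Suc)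
  ultimately show False by simp
qed

lemma alg_contig:
  fixes a b s r x X Y A B B' Q Q' C E1 E0 :: complex
  assumes "Q \<noteq> 0" "Q' \<noteq> 0" "C \<noteq> 0" "s \<noteq> 0" "r \<noteq> 0" and e: "E1 - E0 = b * r"
  shows "(1-a)*A*(B*E1)*B'/(Q*r*Q'*(s*C))*(x*X)*Y
       - (1-a)*A*(E0*B)*B'/(Q*r*Q'*(s*C))*(x*X)*Y
       = b*x*(1-a)/s*(A*B*B'/(Q*Q'*C)*X*Y)"
proof -
  have "(1-a)*A*(B*E1)*B'/(Q*r*Q'*(s*C))*(x*X)*Y
       - (1-a)*A*(E0*B)*B'/(Q*r*Q'*(s*C))*(x*X)*Y
       = (1-a)*A*B*B'*(E1 - E0)/(Q*r*Q'*(s*C))*(x*X)*Y"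
    using assms by (simp add: field_simps)
  also have "\<dots> = b*x*(1-a)/s*(A*B*B'/(Q*Q'*C)*X*Y)"
    unfolding e using assms by (simp add: field_simps)
  finally show ?thesis .
qed

lemma qterm_diff_Suc:
  assumes q: "norm q < 1" and c: "\<And>j. c * q ^ j \<noteq> 1"
  shows "qterm q a (b * q) b' c x y (Suc m, n) - qterm q a b b' c x y (Suc m, n)
       = b * x * (1 - a) / (1 - c) * qterm q (a * q) (b * q) b' (c * q) x y (m, n)"
proof -
  have c1: "1 - c \<noteq> 0" using c[of 0] by simp
  have qm: "qpoch q q m \<noteq> 0" "qpoch q q n \<noteq> 0" using qpoch_nz[OF qq_ne1[OF q]] by auto
  have cq: "qpoch (c * q) q (m + n) \<noteq> 0"
    by (rule qpoch_nz) (metis c mult.assoc power_Suc)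
  have q1: "1 - q * q ^ m \<noteq> 0" using qq_ne1[OF q, of m] by simp
  have e1: "qpoch a q (Suc m + n) = (1 - a) * qpoch (a * q) q (m + n)"
    by (simp add: qpoch_Suc')
  have e2: "qpoch c q (Suc m + n) = (1 - c) * qpoch (c * q) q (m + n)"
    by (simp add: qpoch_Suc')
  have e3: "qpoch (b * q) q (Suc m) = qpoch (b * q) q m * (1 - b * q * q ^ m)"
    by (simp add: qpoch_Suc)
  have e4: "qpoch b q (Suc m) = (1 - b) * qpoch (b * q) q m"
    by (simp add: qpoch_Suc')
  have e5: "qpoch q q (Suc m) = qpoch q q m * (1 - q * q ^ m)"
    by (simp add: qpoch_Suc)
  show ?thesis
    unfolding qterm_def split e1 e2 e3 e4 e5 power_Suc mult.assoc[of b q]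
    by (rule alg_contig) (use c1 qm cq q1 in \<open>auto simp: algebra_simps\<close>)
qed

lemma contig:
  assumes q: "norm q < 1" and c: "\<And>j. c * q ^ j \<noteq> 1" and x: "norm x < 1" and y: "norm y < 1"
  shows "qAppell1 q a (b * q) b' c x y = qAppell1 q a b b' c x y
           + b * x * (1 - a) / (1 - c) * qAppell1 q (a * q) (b * q) b' (c * q) x y"
proof -
  define K where "K = b * x * (1 - a) / (1 - c)"
  define g where "g = qterm q (a * q) (b * q) b' (c * q) x y"
  define D where "D = (\<lambda>p. qterm q a (b * q) b' c x y p - qterm q a b b' c x y p)"
  define h where "h = (\<lambda>(m::nat, n::nat). (Suc m, n))"
  have c': "(c * q) * q ^ j \<noteq> 1" for j by (metis c mult.assoc power_Suc)
  have gs: "(g has_sum infsum g UNIV) UNIV"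
    unfolding g_def by (rule has_sum_infsum, rule qterm_summable[OF q c' x y])
  have "((\<lambda>p. K * g p) has_sum (K * infsum g UNIV)) UNIV"
    by (rule has_sum_cmult_right[OF gs])
  moreover have "(\<lambda>p. K * g p) = D \<circ> h"
    using qterm_diff_Suc[OF q c] by (auto simp: fun_eq_iff D_def h_def K_def g_def)
  ultimately have "((D \<circ> h) has_sum (K * infsum g UNIV)) UNIV" by simp
  moreover have "inj h" by (auto simp: h_def inj_def)
  ultimately have "(D has_sum (K * infsum g UNIV)) (range h)"
    by (simp add: has_sum_reindex)
  moreover have "D p = 0" if "p \<notin> range h" for p
  proof -
    obtain m n where p: "p = (m, n)" by fastforce
    have "m = 0"
    proof (rule ccontr)
      assume "m \<noteq> 0"
      then obtain k where "m = Suc k" using not0_implies_Suc by blast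
      then have "p \<in> range h" by (auto simp: p h_def)
      with that show False by simp
    qed
    then show ?thesis by (simp add: D_def qterm_def p qpoch_def)
  qed
  ultimately have Ds: "(D has_sum (K * infsum g UNIV)) UNIV"
    by (subst (asm) has_sum_cong_neutral[where T = UNIV and g = D]) auto
  have fs: "(qterm q a b b' c x y has_sum qAppell1 q a b b' c x y) UNIV"
    unfolding qAppell1_eq by (rule has_sum_infsum, rule qterm_summable[OF q c x y])
  have "((\<lambda>p. qterm q a b b' c x y p + D p) has_sum (qAppell1 q a b b' c x y + K * infsum g UNIV)) UNIV"
    by (rule has_sum_add[OF fs Ds])
  moreover have "(\<lambda>p. qterm q a b b' c x y p + D p) = qterm q a (b * q) b' c x y"
    by (auto simp: D_def fun_eq_iff)
  ultimately have "(qterm q a (b * q) b' c x y has_sum (qAppell1 q a b b' c x y + K * infsum g UNIV)) UNIV"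
    by simp
  then show ?thesis unfolding qAppell1_eq K_def g_def by (rule infsumI)
qed

lemma part1:
  assumes q: "norm q < 1" and c: "\<And>j. c * q ^ j \<noteq> 1" and x: "norm x < 1" and y: "norm y < 1"
  shows "qAppell1 q a (b * q ^ n) b' c x y
           = qAppell1 q a b b' c x y
             + b * x * (1 - a) / (1 - c)
               * (\<Sum>k=1..n. q ^ (k - 1) * qAppell1 q (a * q) (b * q ^ k) b' (c * q) x y)"
proof (induction n)
  case 0 then show ?case by simp
next
  case (Suc n)
  have "qAppell1 q a (b * q ^ Suc n) b' c x y = qAppell1 q a ((b * q ^ n) * q) b' c x y"
    by (metis power_Suc2 mult.assoc)
  also have "\<dots> = qAppell1 q a (b * q ^ n) b' c x y
      + (b * q ^ n) * x * (1 - a) / (1 - c) * qAppell1 q (a * q) (b * q ^ Suc n) b' (c * q) x y"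
    by (subst contig[OF q c x y]) (simp add: mult_ac)
  also have "\<dots> = qAppell1 q a b b' c x y
             + b * x * (1 - a) / (1 - c)
               * (\<Sum>k=1..Suc n. q ^ (k - 1) * qAppell1 q (a * q) (b * q ^ k) b' (c * q) x y)"
    unfolding Suc.IH by (simp add: algebra_simps)
  finally show ?case .
qed

lemma part2:
  assumes q0: "q \<noteq> 0" and q: "norm q < 1" and c: "\<And>j. c * q ^ j \<noteq> 1" and x: "norm x < 1" and y: "norm y < 1"
  shows "qAppell1 q a (b * q powi (- int n)) b' c x y
           = qAppell1 q a b b' c x y
             - b * x * (1 - a) / (1 - c)
               * (\<Sum>k=1..n. q powi (- int k) * qAppell1 q (a * q) (b * q powi (1 - int k)) b' (c * q) x y)"
proof (induction n)
  case 0 then show ?case by simp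
next
  case (Suc n)
  define b0 where "b0 = b * q powi (- int (Suc n))"
  have pw: "q powi (- int (Suc n)) * q = q powi (- int n)"
    using power_int_add[of q "- int (Suc n)" 1] q0 by simp
  have b0q: "b0 * q = b * q powi (- int n)"
    unfolding b0_def using pw by (simp add: mult.assoc)
  have e: "1 - int (Suc n) = - int n" by simp
  have "qAppell1 q a (b * q powi (- int n)) b' c x y = qAppell1 q a b0 b' c x y
      + b0 * x * (1 - a) / (1 - c) * qAppell1 q (a * q) (b * q powi (- int n)) b' (c * q) x y"
    unfolding b0q[symmetric] by (rule contig[OF q c x y])
  then have "qAppell1 q a b0 b' c x y = qAppell1 q a (b * q powi (- int n)) b' c x y
      - b0 * x * (1 - a) / (1 - c) * qAppell1 q (a * q) (b * q powi (- int n)) b' (c * q) x y"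
    by (simp add: algebra_simps)
  also have "\<dots> = qAppell1 q a b b' c x y
             - b * x * (1 - a) / (1 - c)
               * (\<Sum>k=1..Suc n. q powi (- int k) * qAppell1 q (a * q) (b * q powi (1 - int k)) b' (c * q) x y)"
    unfolding Suc.IH b0_def e by (simp add: algebra_simps)
  finally show ?case unfolding b0_def .
qed

theorem theorem3:
  fixes q a b b' c x y :: complex and n :: nat
  assumes "0 < norm q" "norm q < 1"
    and "\<And>j::nat. c * q ^ j \<noteq> 1"
    and "norm x < 1" "norm y < 1"
    and "n \<ge> 1"
  shows "qAppell1 q a (b * q ^ n) b' c x y
           = qAppell1 q a b b' c x y
             + b * x * (1 - a) / (1 - c)
               * (\<Sum>k=1..n. q ^ (k - 1) * qAppell1 q (a * q) (b * q ^ k) b' (c * q) x y)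
       \<and> qAppell1 q a (b * q powi (- int n)) b' c x y
           = qAppell1 q a b b' c x y
             - b * x * (1 - a) / (1 - c)
               * (\<Sum>k=1..n. q powi (- int k) * qAppell1 q (a * q) (b * q powi (1 - int k)) b' (c * q) x y)"
proof
  show "qAppell1 q a (b * q ^ n) b' c x y
           = qAppell1 q a b b' c x y
             + b * x * (1 - a) / (1 - c)
               * (\<Sum>k=1..n. q ^ (k - 1) * qAppell1 q (a * q) (b * q ^ k) b' (c * q) x y)"
    by (rule part1) (use assms in auto)
  have "q \<noteq> 0" using assms(1) by auto
  then show "qAppell1 q a (b * q powi (- int n)) b' c x y
           = qAppell1 q a b b' c x y
             - b * x * (1 - a) / (1 - c)
               * (\<Sum>k=1..n. q powi (- int k) * qAppell1 q (a * q) (b * q powi (1 - int k)) b' (c * q) x y)"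
    by (rule part2) (use assms in auto)
qed

end
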